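(* Let $n\ge 1$, let $\rho\in\mathbb{R}$, and let $H_n$ be the $(2n+1)$-dimensional Heisenberg group with left-invariant frame $e_1,\dots,e_{2n+1}$ as described in the context, $N=2n+1$. Let $g_0$ be a left-invariant metric on $H_n$ which is diagonal in this frame, and let $g(t)$ be a solution of the Ricci–Bourguignon flow $\frac{\partial}{\partial t}g(t)=-2\,\mathrm{Ric}(g(t))+2\rho R(g(t))g(t)$, $g(0)=g_0$, by left-invariant metrics diagonal in this frame, with components $g_I(t)=g(t)(e_I,e_I)$. Then: (a) $\frac{d}{dt}\frac{g_i(t)}{g_{i+n}(t)}=0$ for $1\le i\le n$; (b) $\frac{d}{dt}\Big(g_1(t)\cdots g_n(t)\,g_N(t)^{\frac{1-n\rho}{1+\rho}}\Big)=\frac{d}{dt}\Big(g_{1+n}(t)\cdots g_{2n}(t)\,g_N(t)^{\frac{1-n\rho}{1+\rho}}\Big)=0$; (c) if $\rho<0$ and $G_N(t)=\int_0^t g_N(r)\,dr$, then $\lim_{t\to+\infty}G_N(t)=+\infty$; (d) if moreover $g_i(0)g_{n+i}(0)=g_1(0)g_{1+n}(0)$ for all $1\le i\le n$, then the solution has the form $g_j(t)=g_j(0)(1+bt)^{\frac{1-n\rho}{n+2-n\rho}}$ for $1\le j\le 2n$, and $g_N(t)=g_N(0)(1+bt)^{\frac{n+n\rho}{n\rho-n-2}}$, where $b=(n+2-n\rho)\frac{g_N(0)}{g_1(0)g_{1+n}(0)}$.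
   Context: The Heisenberg group $H_n$ is $\mathbb{R}^{2n+1}$ with coordinates $(x,y,z)$, $x=(x^1,\dots,x^n)$, $y=(x^{n+1},\dots,x^{2n})$, $z=x^{2n+1}$, and product $(x,y,z)\circ(x',y',z')=(x+x',y+y',z+z'+x\cdot y')$, where $x\cdot y'$ is the Euclidean inner product. The left-invariant vector fields $e_i=\partial_i$, $e_{n+i}=\partial_{n+i}+x^i\partial_{2n+1}$ ($1\le i\le n$), $e_{2n+1}=\partial_{2n+1}$ form a frame whose only nonzero brackets are $[e_i,e_{n+i}]=e_{2n+1}$, $1\le i\le n$. A left-invariant metric $g$ is diagonal if $g(e_I,e_J)=0$ for $I\neq J$; write $g_I=g(e_I,e_I)$. $\mathrm{Ric}$ denotes the Ricci tensor and $R$ the scalar curvature. For diagonal left-invariant metrics the Ricci tensor is diagonal in this frame, with $\mathrm{Ric}(e_i,e_i)=-\frac{g_N}{2g_{n+i}}$, $\mathrm{Ric}(e_{n+i},e_{n+i})=-\frac{g_N}{2g_i}$, $\mathrm{Ric}(e_N,e_N)=\frac12 g_N^2\Sigma$, $R=-\frac12 g_N\Sigma$, where $\Sigma=\sum_{k=1}^n\frac{1}{g_kg_{n+k}}$; thus the flow is the ODE system $g_i'=\frac{g_N}{g_{i+n}}-\rho g_ig_N\Sigma$, $g_{i+n}'=\frac{g_N}{g_i}-\rho g_{i+n}g_N\Sigma$, $g_N'=-(1+\rho)g_N^2\Sigma$. In part (c) the solution is understood to be defined for all $t\ge 0$; in part (d) the formula is understood for $t$ with $1+bt>0$ (and $n+2-n\rho\ne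 0$). *)

theory Defs
  imports "HOL-Analysis.Analysis"
begin

text \<open>A diagonal left-invariant metric on H_n is encoded by its components
  g I t = g(t)(e_I,e_I), I = 1..2n+1 (N = 2n+1), t the flow time.\<close>

definition Sigma_H :: "nat \<Rightarrow> (nat \<Rightarrow> real \<Rightarrow> real) \<Rightarrow> real \<Rightarrow> real" where
  "Sigma_H n g t = (\<Sum>k=1..n. 1 / (g k t * g (n + k) t))"

definition Ric_H :: "nat \<Rightarrow> (nat \<Rightarrow> real \<Rightarrow> real) \<Rightarrow> nat \<Rightarrow> real \<Rightarrow> real" where
  "Ric_H n g I t =
     (if 1 \<le> I \<and> I \<le> n then - g (2*n+1) t / (2 * g (n + I) t)
      else if n < I \<and> I \<le> 2*n then - g (2*n+1) t / (2 * g (I - n) t)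
      else if I = 2*n+1 then (1/2) * (g (2*n+1) t)^2 * Sigma_H n g t
      else 0)"

definition scal_H :: "nat \<Rightarrow> (nat \<Rightarrow> real \<Rightarrow> real) \<Rightarrow> real \<Rightarrow> real" where
  "scal_H n g t = - (1/2) * g (2*n+1) t * Sigma_H n g t"

definition RB_solution :: "nat \<Rightarrow> real \<Rightarrow> (nat \<Rightarrow> real \<Rightarrow> real) \<Rightarrow> real set \<Rightarrow> bool" where
  "RB_solution n \<rho> g J \<longleftrightarrow>
     is_interval J \<and> 0 \<in> J \<and>
     (\<forall>I\<in>{1..2*n+1}. \<forall>t\<in>J. 0 < g I t \<and>
        (g I has_real_derivative
           (-2 * Ric_H n g I t + 2 * \<rho> * scal_H n g t * g I t)) (at t within J))"

end

theory Submission
  imports Defs "HOL-Real_Asymp.Real_Asymp"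
begin

lemma RB_pos: "RB_solution n \<rho> g J \<Longrightarrow> I \<in> {1..2*n+1} \<Longrightarrow> t \<in> J \<Longrightarrow> 0 < g I t"
  unfolding RB_solution_def by blast

lemma RB_d_low:
  assumes "RB_solution n \<rho> g J" "i \<in> {1..n}" "t \<in> J"
  shows "(g i has_real_derivative (g (2*n+1) t / g (n+i) t - \<rho> * g i t * g (2*n+1) t * Sigma_H n g t)) (at t within J)"
proof -
  have "(g i has_real_derivative (-2 * Ric_H n g i t + 2 * \<rho> * scal_H n g t * g i t)) (at t within J)"
    using assms unfolding RB_solution_def by auto
  then show ?thesis apply (rule DERIV_cong) using assms(2) by (auto simp: Ric_H_def scal_H_def)
qed

lemma RB_d_high:
  assumes "RB_solution n \<rho> g J" "i \<in> {1..n}" "t \<in> J"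
  shows "(g (n+i) has_real_derivative (g (2*n+1) t / g i t - \<rho> * g (n+i) t * g (2*n+1) t * Sigma_H n g t)) (at t within J)"
proof -
  have "(g (n+i) has_real_derivative (-2 * Ric_H n g (n+i) t + 2 * \<rho> * scal_H n g t * g (n+i) t)) (at t within J)"
    using assms unfolding RB_solution_def by auto
  then show ?thesis apply (rule DERIV_cong) using assms(2) by (auto simp: Ric_H_def scal_H_def)
qed

lemma RB_d_N:
  assumes "RB_solution n \<rho> g J" "t \<in> J"
  shows "(g (2*n+1) has_real_derivative (- (1+\<rho>) * (g (2*n+1) t)^2 * Sigma_H n g t)) (at t within J)"
proof -
  have "(g (2*n+1) has_real_derivative (-2 * Ric_H n g (2*n+1) t + 2 * \<rho> * scal_H n g t * g (2*n+1) t)) (at t within J)"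
    using assms unfolding RB_solution_def by auto
  then show ?thesis apply (rule DERIV_cong) by (auto simp: Ric_H_def scal_H_def power2_eq_square algebra_simps)
qed

lemma RB_d_P:
  assumes "RB_solution n \<rho> g J" "i \<in> {1..n}" "t \<in> J"
  shows "((\<lambda>s. g i s * g (n+i) s) has_real_derivative
     (2 * g (2*n+1) t - 2 * \<rho> * (g i t * g (n+i) t) * g (2*n+1) t * Sigma_H n g t)) (at t within J)"
proof -
  have p: "g i t > 0" "g (n+i) t > 0" using RB_pos[OF assms(1) _ assms(3)] assms(2) by auto
  show ?thesis
    apply (rule DERIV_cong[OF DERIV_mult[OF RB_d_low[OF assms] RB_d_high[OF assms]]])
    using p by (simp add: field_simps)
qed

lemma mono_deriv:
  fixes f f' :: "real \<Rightarrow> real"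
  assumes S: "is_interval S" and d: "\<And>x. x\<in>S \<Longrightarrow> (f has_real_derivative f' x) (at x within S)"
    and nn: "\<And>x. x\<in>S \<Longrightarrow> f' x \<ge> 0" and ab: "a\<in>S" "b\<in>S" "a\<le>b"
  shows "f a \<le> f b"
proof (rule DERIV_nonneg_imp_increasing_open[OF \<open>a\<le>b\<close>])
  have sub: "{a..b} \<subseteq> S" using S ab by (meson atLeastAtMost_iff is_interval_1 subsetI)
  show "continuous_on {a..b} f"
    using continuous_on_subset[OF DERIV_continuous_on[OF d] sub] by blast
  fix x assume x: "a < x" "x < b"
  have "{a<..<b} \<subseteq> S" using sub by auto
  then have "x \<in> interior S" using x interior_maximal[of "{a<..<b}" S] by auto
  then have "at x within S = at x" by (rule at_within_interior)
  moreover have "x \<in> S" using sub x by auto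
  ultimately show "\<exists>y. DERIV f x :> y \<and> 0 \<le> y" using d[of x] nn[of x] by auto
qed

lemma const_deriv:
  fixes f :: "real \<Rightarrow> real"
  assumes S: "is_interval S" and d: "\<And>x. x\<in>S \<Longrightarrow> (f has_real_derivative 0) (at x within S)"
    and ab: "a\<in>S" "b\<in>S"
  shows "f a = f b"
proof -
  have "convex S" using S is_interval_convex_1 by blast
  from has_field_derivative_zero_constant[OF this d] obtain c where "\<forall>x\<in>S. f x = c" by blast
  then show ?thesis using ab by auto
qed

lemma part_a:
  assumes "RB_solution n \<rho> g J" "i \<in> {1..n}" "t \<in> J"
  shows "((\<lambda>s. g i s / g (i + n) s) has_real_derivative 0) (at t within J)"
proof -
  have e: "i+n = n+i" by simp
  have p: "g i t > 0" "g (n+i) t > 0" using RB_pos[OF assms(1) _ assms(3)] assms(2) by auto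
  show ?thesis unfolding e
    apply (rule DERIV_cong[OF DERIV_divide[OF RB_d_low[OF assms] RB_d_high[OF assms]]])
    using p by (auto simp: field_simps)
qed

lemma ln_d:
  assumes "(f has_real_derivative D) (at t within J)" "f t > 0"
  shows "((\<lambda>s. ln (f s)) has_real_derivative D / f t) (at t within J)"
  using DERIV_chain2[OF DERIV_ln[OF assms(2)] assms(1)] by (simp add: field_simps)

lemma aux_s2:
  fixes c r k N S :: real
  assumes "c * (1+r) = k" "N > 0"
  shows "c * ((-(1+r)*N^2*S)/N) = -k*N*S"
proof -
  have "c * ((-(1+r)*N^2*S)/N) = -(c*(1+r))*N*S" using assms(2) by (simp add: power2_eq_square field_simps)
  then show ?thesis using assms(1) by simp
qed

lemma aux_lin:
  fixes r P N S :: real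
  shows "0 \<le> -r*P*N*S \<Longrightarrow> N > 0 \<Longrightarrow> 0 \<le> 2*N - 2*r*P*N*S"
proof -
  assume a: "0 \<le> -r*P*N*S" "N > 0"
  have "(-r)*P*N*S = -(r*P*N*S)" by simp
  then show ?thesis using a by linarith
qed

lemma prod_core:
  fixes f :: "nat \<Rightarrow> real \<Rightarrow> real"
  assumes RB: "RB_solution n \<rho> g J" and r: "\<rho> \<noteq> -1" and t: "t \<in> J"
    and fpos: "\<And>i s. i \<in> {1..n} \<Longrightarrow> s \<in> J \<Longrightarrow> f i s > 0"
    and fd: "\<And>i. i \<in> {1..n} \<Longrightarrow> ((\<lambda>s. ln (f i s)) has_real_derivative
         g (2*n+1) t * (1 / (g i t * g (n+i) t)) - \<rho> * g (2*n+1) t * Sigma_H n g t) (at t within J)"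
  shows "((\<lambda>s. (\<Prod>i=1..n. f i s) * g (2*n+1) s powr ((1 - real n * \<rho>) / (1 + \<rho>)))
           has_real_derivative 0) (at t within J)"
proof -
  let ?c = "(1 - real n * \<rho>) / (1 + \<rho>)"
  let ?N = "g (2*n+1)"
  let ?S = "Sigma_H n g t"
  have Np: "?N s > 0" if "s \<in> J" for s using RB_pos[OF RB _ that] by auto
  have d1: "((\<lambda>s. \<Sum>i=1..n. ln (f i s)) has_real_derivative
     (\<Sum>i=1..n. ?N t * (1 / (g i t * g (n+i) t)) - \<rho> * ?N t * ?S)) (at t within J)"
    by (rule DERIV_sum) (rule fd)
  have s1: "(\<Sum>i=1..n. ?N t * (1 / (g i t * g (n+i) t)) - \<rho> * ?N t * ?S) = ?N t * ?S - real n * \<rho> * ?N t * ?S"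
    by (simp add: sum_subtractf sum_distrib_left Sigma_H_def mult.assoc)
  have d2: "((\<lambda>s. ?c * ln (?N s)) has_real_derivative ?c * ((- (1+\<rho>) * (?N t)^2 * ?S) / ?N t)) (at t within J)"
    by (rule DERIV_cmult, rule ln_d[OF RB_d_N[OF RB t] Np[OF t]])
  have r': "1 + \<rho> \<noteq> 0" using r by auto
  have s2: "?c * ((- (1+\<rho>) * (?N t)^2 * ?S) / ?N t) = - (1 - real n * \<rho>) * ?N t * ?S"
    by (rule aux_s2) (use Np[OF t] r' in auto)
  have d3: "((\<lambda>s. exp ((\<Sum>i=1..n. ln (f i s)) + ?c * ln (?N s))) has_real_derivative
      exp ((\<Sum>i=1..n. ln (f i t)) + ?c * ln (?N t)) * 0) (at t within J)"
    apply (rule DERIV_chain2[OF DERIV_exp])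
    apply (rule DERIV_cong[OF DERIV_add[OF d1 d2]])
    unfolding s1 s2 by (simp add: algebra_simps)
  show ?thesis
  proof (rule has_field_derivative_transform_within[OF _ zero_less_one t])
    show "((\<lambda>s. exp ((\<Sum>i=1..n. ln (f i s)) + ?c * ln (?N s))) has_real_derivative 0) (at t within J)"
      using d3 by simp
    fix x assume x: "x \<in> J"
    have "(\<Sum>i=1..n. ln (f i x)) = ln (\<Prod>i=1..n. f i x)"
      by (rule ln_prod[symmetric]) (use fpos x in force)+
    moreover have "(\<Prod>i=1..n. f i x) > 0" by (intro prod_pos) (use fpos x in auto)
    ultimately show "exp ((\<Sum>i=1..n. ln (f i x)) + ?c * ln (?N x)) = (\<Prod>i=1..n. f i x) * ?N x powr ?c"
      using Np[OF x] by (simp add: exp_add powr_def mult.commute)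
  qed
qed

lemma part_b:
  assumes RB: "RB_solution n \<rho> g J" and r: "\<rho> \<noteq> -1" and t: "t \<in> J"
  shows "((\<lambda>s. (\<Prod>i=1..n. g i s) * g (2*n+1) s powr ((1 - real n * \<rho>) / (1 + \<rho>)))
           has_real_derivative 0) (at t within J)"
    "((\<lambda>s. (\<Prod>i=1..n. g (i + n) s) * g (2*n+1) s powr ((1 - real n * \<rho>) / (1 + \<rho>)))
           has_real_derivative 0) (at t within J)"
proof -
  show "((\<lambda>s. (\<Prod>i=1..n. g i s) * g (2*n+1) s powr ((1 - real n * \<rho>) / (1 + \<rho>)))
           has_real_derivative 0) (at t within J)"
  proof (rule prod_core[OF RB r t])
    fix i s assume "i \<in> {1..n}" "s \<in> J" then show "g i s > 0" using RB_pos[OF RB] by auto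
  next
    fix i assume i: "i \<in> {1..n}"
    have p: "g i t > 0" "g (n+i) t > 0" using RB_pos[OF RB _ t] i by auto
    show "((\<lambda>s. ln (g i s)) has_real_derivative
         g (2*n+1) t * (1 / (g i t * g (n+i) t)) - \<rho> * g (2*n+1) t * Sigma_H n g t) (at t within J)"
      apply (rule DERIV_cong[OF ln_d[OF RB_d_low[OF RB i t] p(1)]])
      using p by (simp add: field_simps)
  qed
  show "((\<lambda>s. (\<Prod>i=1..n. g (i + n) s) * g (2*n+1) s powr ((1 - real n * \<rho>) / (1 + \<rho>)))
           has_real_derivative 0) (at t within J)"
  proof (rule prod_core[OF RB r t])
    fix i s assume "i \<in> {1..n}" "s \<in> J" then show "g (i+n) s > 0" using RB_pos[OF RB] by auto
  next
    fix i assume i: "i \<in> {1..n}"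
    have p: "g i t > 0" "g (n+i) t > 0" using RB_pos[OF RB _ t] i by auto
    have e: "i + n = n + i" by simp
    show "((\<lambda>s. ln (g (i+n) s)) has_real_derivative
         g (2*n+1) t * (1 / (g i t * g (n+i) t)) - \<rho> * g (2*n+1) t * Sigma_H n g t) (at t within J)"
      unfolding e
      apply (rule DERIV_cong[OF ln_d[OF RB_d_high[OF RB i t] p(2)]])
      using p by (simp add: field_simps)
  qed
qed

lemma Sigma_nonneg: "RB_solution n \<rho> g J \<Longrightarrow> t \<in> J \<Longrightarrow> Sigma_H n g t \<ge> 0"
  unfolding Sigma_H_def
proof (rule sum_nonneg)
  fix k assume "RB_solution n \<rho> g J" "t \<in> J" "k \<in> {1..n}"
  then have "g k t > 0" "g (n+k) t > 0" using RB_pos[of n \<rho> g J] by auto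
  then show "0 \<le> 1 / (g k t * g (n + k) t)" by simp
qed

lemma part_c:
  assumes RB: "RB_solution n \<rho> g J" and r: "\<rho> < 0" and J: "{0..} \<subseteq> J"
  shows "filterlim (\<lambda>t. integral {0..t} (g (2*n+1))) at_top at_top"
proof -
  let ?N = "g (2*n+1)"
  let ?S = "Sigma_H n g"
  have Np: "?N s > 0" if "s \<in> J" for s using RB_pos[OF RB _ that] by auto
  have J0: "0 \<in> J" using J by auto
  have Pmono: "g k 0 * g (n+k) 0 \<le> g k t * g (n+k) t" if k: "k \<in> {1..n}" and t: "0 \<le> t" for k t
  proof (rule mono_deriv[where S="{0..}" and f="\<lambda>s. g k s * g (n+k) s"])
    fix x :: real assume x: "x \<in> {0..}"
    then have xJ: "x \<in> J" using J by auto
    show "((\<lambda>s. g k s * g (n+k) s) has_real_derivative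
     (2 * ?N x - 2 * \<rho> * (g k x * g (n+k) x) * ?N x * ?S x)) (at x within {0..})"
      by (rule DERIV_subset[OF RB_d_P[OF RB k xJ] J])
    have "g k x > 0" "g (n+k) x > 0" using RB_pos[OF RB _ xJ] k by auto
    moreover have "?S x \<ge> 0" by (rule Sigma_nonneg[OF RB xJ])
    ultimately have "- \<rho> * (g k x * g (n+k) x) * ?N x * ?S x \<ge> 0"
      using r Np[OF xJ] by (intro mult_nonneg_nonneg) auto
    then show "2 * ?N x - 2 * \<rho> * (g k x * g (n+k) x) * ?N x * ?S x \<ge> 0"
      using Np[OF xJ] by (rule aux_lin)
  qed (use t in auto)
  have Smono: "?S t \<le> ?S 0" if t: "0 \<le> t" for t
    unfolding Sigma_H_def
  proof (rule sum_mono)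
    fix k assume k: "k \<in> {1..n}"
    have "g k 0 * g (n+k) 0 > 0" using RB_pos[OF RB _ J0] k by auto
    then show "1 / (g k t * g (n + k) t) \<le> 1 / (g k 0 * g (n + k) 0)"
      using Pmono[OF k t] by (simp add: frac_le)
  qed
  define C where "C = \<bar>1+\<rho>\<bar> * ?S 0 + 1"
  define a where "a = 1 / ?N 0"
  have Cp: "C > 0" unfolding C_def using Sigma_nonneg[OF RB J0] by (simp add: add_nonneg_pos)
  have ap: "a > 0" unfolding a_def using Np[OF J0] by simp
  have invb: "1 / ?N t \<le> a + C * t" if t: "0 \<le> t" for t
  proof -
    have "(\<lambda>s. a + C * s - inverse (?N s)) 0 \<le> (\<lambda>s. a + C * s - inverse (?N s)) t"
    proof (rule mono_deriv[where S="{0..}" and f="\<lambda>s. a + C * s - inverse (?N s)"])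
      fix x :: real assume x: "x \<in> {0..}"
      then have xJ: "x \<in> J" using J by auto
      have d: "((\<lambda>s. inverse (?N s)) has_real_derivative
          - ((- (1+\<rho>) * (?N x)^2 * ?S x) * (inverse (?N x) * inverse (?N x)))) (at x within {0..})"
        using DERIV_inverse_fun[OF DERIV_subset[OF RB_d_N[OF RB xJ] J]] Np[OF xJ] by simp
      show "((\<lambda>s. a + C * s - inverse (?N s)) has_real_derivative
          C - (- ((- (1+\<rho>) * (?N x)^2 * ?S x) * (inverse (?N x) * inverse (?N x))))) (at x within {0..})"
        by (rule DERIV_cong[OF DERIV_diff[OF DERIV_add[OF DERIV_const DERIV_cmult[OF DERIV_ident]] d]]) simp
      have "(1+\<rho>) * ?S x \<le> \<bar>1+\<rho>\<bar> * ?S 0"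
      proof (cases "1 + \<rho> \<ge> 0")
        case True then show ?thesis using Smono[of x] x by (simp add: mult_left_mono)
      next
        case False then have "(1+\<rho>) * ?S x \<le> 0" using Sigma_nonneg[OF RB xJ]
          by (simp add: mult_nonpos_nonneg)
        then show ?thesis using Sigma_nonneg[OF RB J0] by (smt (verit) mult_nonneg_nonneg abs_ge_zero)
      qed
      moreover have "- ((- (1+\<rho>) * (?N x)^2 * ?S x) * (inverse (?N x) * inverse (?N x))) = (1+\<rho>) * ?S x"
        using Np[OF xJ] by (simp add: field_simps power2_eq_square)
      ultimately show "C - (- ((- (1+\<rho>) * (?N x)^2 * ?S x) * (inverse (?N x) * inverse (?N x)))) \<ge> 0"
        unfolding C_def by linarith
    qed (use t in auto)
    then show ?thesis unfolding a_def by (simp add: divide_inverse)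
  qed
  have lower: "ln (a + C * t) / C - ln a / C \<le> integral {0..t} ?N" if t: "0 \<le> t" for t
  proof -
    have cont: "continuous_on {0..t} ?N"
    proof -
      have "{0..t} \<subseteq> J" using J by auto
      then show ?thesis using continuous_on_subset[OF DERIV_continuous_on[OF RB_d_N[OF RB]]] by blast
    qed
    have "(\<lambda>s. integral {0..s} ?N - ln (a + C * s) / C) 0 \<le> (\<lambda>s. integral {0..s} ?N - ln (a + C * s) / C) t"
    proof (rule mono_deriv[where S="{0..t}" and f="\<lambda>s. integral {0..s} ?N - ln (a + C * s) / C"])
      fix x assume x: "x \<in> {0..t}"
      then have xJ: "x \<in> J" using J by auto
      have pos: "a + C * x > 0" using ap Cp x by (simp add: add_pos_nonneg)
      show "((\<lambda>s. integral {0..s} ?N - ln (a + C * s) / C) has_real_derivative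
            ?N x - (C / (a + C * x)) / C) (at x within {0..t})"
      proof (rule DERIV_diff[OF integral_has_real_derivative[OF cont x]])
        show "((\<lambda>s. ln (a + C * s) / C) has_real_derivative (C / (a + C * x)) / C) (at x within {0..t})"
        proof (rule DERIV_cdivide)
          have "((\<lambda>s. a + C * s) has_real_derivative C) (at x within {0..t})"
            by (rule DERIV_cong[OF DERIV_add[OF DERIV_const DERIV_cmult[OF DERIV_ident]]]) simp
          then show "((\<lambda>s. ln (a + C * s)) has_real_derivative C / (a + C * x)) (at x within {0..t})"
            using ln_d pos by blast
        qed
      qed
      have "1 / ?N x \<le> a + C * x" using invb x by auto
      then have "1 / (a + C * x) \<le> 1 / (1 / ?N x)"
        by (rule divide_left_mono) (use Np[OF xJ] pos in auto)
      then have "1 / (a + C * x) \<le> ?N x" by simp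
      then show "?N x - (C / (a + C * x)) / C \<ge> 0" using Cp by simp
    qed (use t in auto)
    then show ?thesis by simp
  qed
  have "filterlim (\<lambda>t. ln (a + C * t) / C - ln a / C) at_top at_top"
    using Cp ap by real_asymp
  moreover have "eventually (\<lambda>t. ln (a + C * t) / C - ln a / C \<le> integral {0..t} ?N) at_top"
    using lower by (auto intro: eventually_at_top_linorderI[of 0])
  ultimately show ?thesis by (rule filterlim_at_top_mono)
qed

lemma P_equal:
  assumes RB: "RB_solution n \<rho> g J" and i: "i \<in> {1..n}" and t: "t \<in> J"
    and n1: "1 \<le> n" and H0: "g i 0 * g (n+i) 0 = g 1 0 * g (n+1) 0"
  shows "g i t * g (n+i) t = g 1 t * g (n+1) t"
proof -
  let ?N = "g (2*n+1)"
  let ?S = "Sigma_H n g"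
  let ?P = "\<lambda>k s. g k s * g (n+k) s"
  define Dn where "Dn = (1+\<rho>)^2 + 4*(1 - real n*\<rho>)^2"
  have Dn: "Dn > 0"
  proof -
    have "(1+\<rho>)^2 > 0 \<or> (1 - real n*\<rho>)^2 > 0"
    proof (cases "\<rho> = -1")
      case True then have "1 - real n*\<rho> = 1 + real n" by simp
      then show ?thesis by simp
    qed simp
    then show ?thesis unfolding Dn_def
      by (metis add_pos_nonneg add_nonneg_pos zero_le_power2 mult_pos_pos mult_nonneg_nonneg zero_less_numeral zero_le_numeral)
  qed
  define A where "A = 2*\<rho>*(1+\<rho>)/Dn"
  define B where "B = -4*\<rho>*(1 - real n*\<rho>)/Dn"
  have key: "A * (-(1+\<rho>)) + B * (2 - 2*real n*\<rho>) = -2*\<rho>"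
  proof -
    have "A * (-(1+\<rho>)) + B * (2 - 2*real n*\<rho>) = -2*\<rho> * ((1+\<rho>)^2 + 4*(1 - real n*\<rho>)^2) / Dn"
      unfolding A_def B_def using Dn by (simp add: field_simps power2_eq_square)
    also have "\<dots> = -2*\<rho>" using Dn unfolding Dn_def[symmetric] by simp
    finally show ?thesis .
  qed
  have i1: "1 \<in> {1..n}" using n1 by auto
  have Np: "?N s > 0" if "s \<in> J" for s using RB_pos[OF RB _ that] by auto
  have Pp: "?P k s > 0" if "k \<in> {1..n}" "s \<in> J" for k s using RB_pos[OF RB _ that(2)] that(1) by auto
  have dY: "((\<lambda>s. (?P i s - ?P 1 s) * exp (- (A * ln (?N s) + B * (\<Sum>k=1..n. ln (?P k s)))))
      has_real_derivative 0) (at x within J)" if x: "x \<in> J" for x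
  proof -
    have dlnN: "((\<lambda>s. ln (?N s)) has_real_derivative -(1+\<rho>) * ?N x * ?S x) (at x within J)"
      apply (rule DERIV_cong[OF ln_d[OF RB_d_N[OF RB x] Np[OF x]]])
      using Np[OF x] by (simp add: power2_eq_square)
    have dlnP: "((\<lambda>s. \<Sum>k=1..n. ln (?P k s)) has_real_derivative
        (\<Sum>k=1..n. 2 * ?N x * (1 / ?P k x) - 2 * \<rho> * ?N x * ?S x)) (at x within J)"
    proof (rule DERIV_sum)
      fix k assume k: "k \<in> {1..n}"
      show "((\<lambda>s. ln (?P k s)) has_real_derivative 2 * ?N x * (1 / ?P k x) - 2 * \<rho> * ?N x * ?S x) (at x within J)"
        apply (rule DERIV_cong[OF ln_d[OF RB_d_P[OF RB k x] Pp[OF k x]]])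
        using RB_pos[OF RB _ x, of k] RB_pos[OF RB _ x, of "n+k"] k by (simp add: field_simps)
    qed
    have s1: "(\<Sum>k=1..n. 2 * ?N x * (1 / ?P k x) - 2 * \<rho> * ?N x * ?S x) = (2 - 2*real n*\<rho>) * ?N x * ?S x"
    proof -
      have "(\<Sum>k=1..n. 2 * ?N x * (1 / ?P k x) - 2 * \<rho> * ?N x * ?S x)
          = 2 * ?N x * (\<Sum>k=1..n. 1 / ?P k x) - of_nat (card {1..n}) * (2 * \<rho> * ?N x * ?S x)"
        apply (simp only: sum_subtractf sum_distrib_left[symmetric] sum_constant)
        by (simp add: mult_ac)
      also have "\<dots> = 2 * ?N x * ?S x - real n * (2 * \<rho> * ?N x * ?S x)"
        by (simp add: Sigma_H_def)
      finally show ?thesis by (simp add: algebra_simps)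
    qed
    have dL: "((\<lambda>s. A * ln (?N s) + B * (\<Sum>k=1..n. ln (?P k s))) has_real_derivative
        -2*\<rho> * ?N x * ?S x) (at x within J)"
      apply (rule DERIV_cong[OF DERIV_add[OF DERIV_cmult[OF dlnN] DERIV_cmult[OF dlnP]]])
      unfolding s1 using key
      by (metis (no_types, lifting) mult.assoc ring_class.ring_distribs(2))
    have dE: "((\<lambda>s. exp (- (A * ln (?N s) + B * (\<Sum>k=1..n. ln (?P k s))))) has_real_derivative
        exp (- (A * ln (?N x) + B * (\<Sum>k=1..n. ln (?P k x)))) * (- (-2*\<rho> * ?N x * ?S x))) (at x within J)"
      by (rule DERIV_chain2[OF DERIV_exp DERIV_minus[OF dL]])
    show ?thesis
      by (rule DERIV_cong[OF DERIV_mult[OF DERIV_diff[OF RB_d_P[OF RB i x] RB_d_P[OF RB i1 x]] dE]])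
         (simp add: algebra_simps)
  qed
  have "(\<lambda>s. (?P i s - ?P 1 s) * exp (- (A * ln (?N s) + B * (\<Sum>k=1..n. ln (?P k s))))) t
      = (\<lambda>s. (?P i s - ?P 1 s) * exp (- (A * ln (?N s) + B * (\<Sum>k=1..n. ln (?P k s))))) 0"
    by (rule const_deriv[where S=J, OF _ dY t]) (use RB in \<open>auto simp: RB_solution_def\<close>)
  then show ?thesis using H0 by simp
qed

lemma exp_factor:
  fixes f :: "real \<Rightarrow> real"
  assumes K: "is_interval K" and K0: "0 \<in> K" and t: "t \<in> K" and pos: "\<And>s. s \<in> K \<Longrightarrow> 1 + b * s > 0"
   and d: "\<And>s. s\<in>K \<Longrightarrow> (f has_real_derivative (c * b/(1+b * s)) * f s) (at s within K)"
  shows "f t = f 0 * (1+b * t) powr c"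
proof -
  have dV: "((\<lambda>s. f s * exp (-c * ln (1+b * s))) has_real_derivative 0) (at s within K)" if s: "s \<in> K" for s
  proof -
    have dl: "((\<lambda>s. 1+b * s) has_real_derivative b) (at s within K)"
      by (rule DERIV_cong[OF DERIV_add[OF DERIV_const DERIV_cmult[OF DERIV_ident]]]) simp
    have dE: "((\<lambda>s. exp (-c * ln (1+b * s))) has_real_derivative exp (-c * ln (1+b * s)) * (-c * (b/(1+b * s)))) (at s within K)"
      by (rule DERIV_chain2[OF DERIV_exp DERIV_cmult[OF ln_d[OF dl pos[OF s]]]])
    show ?thesis
      by (rule DERIV_cong[OF DERIV_mult[OF d[OF s] dE]]) (use pos[OF s] in \<open>simp add: field_simps\<close>)
  qed
  have "(\<lambda>s. f s * exp (-c * ln (1+b * s))) t = (\<lambda>s. f s * exp (-c * ln (1+b * s))) 0"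
    by (rule const_deriv[OF K dV t K0])
  then have "f t * exp (-c * ln (1+b * t)) = f 0" by simp
  then have "f t = f 0 * exp (c * ln (1+b * t))"
    by (metis exp_minus_inverse mult.assoc mult.right_neutral mult_minus_left)
  then show ?thesis using pos[OF t] by (simp add: powr_def)
qed

lemma part_d:
  assumes RB: "RB_solution n \<rho> g J" and n1: "1 \<le> n"
    and H: "\<forall>i\<in>{1..n}. g i 0 * g (n + i) 0 = g 1 0 * g (1 + n) 0"
    and nz: "real n + 2 - real n * \<rho> \<noteq> 0"
  shows "let b = (real n + 2 - real n * \<rho>) * g (2*n+1) 0 / (g 1 0 * g (1 + n) 0) in
          \<forall>t\<in>J. 1 + b * t > 0 \<longrightarrow>
            (\<forall>j\<in>{1..2*n}. g j t = g j 0 * (1 + b * t) powr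
                 ((1 - real n * \<rho>) / (real n + 2 - real n * \<rho>)))
            \<and> g (2*n+1) t = g (2*n+1) 0 * (1 + b * t) powr
                 ((real n + real n * \<rho>) / (real n * \<rho> - real n - 2))"
proof -
  let ?N = "g (2*n+1)"
  let ?S = "Sigma_H n g"
  let ?P = "\<lambda>s. g 1 s * g (n+1) s"
  define P0 where "P0 = g 1 0 * g (n+1) 0"
  define N0 where "N0 = ?N 0"
  define c where "c = real n + 2 - real n * \<rho>"
  define b where "b = c * N0 / P0"
  have J: "is_interval J" "0 \<in> J" using RB unfolding RB_solution_def by auto
  have i1: "1 \<in> {1..n}" using n1 by auto
  have Np: "?N s > 0" if "s \<in> J" for s using RB_pos[OF RB _ that] by auto
  have gp: "g k s > 0" if "k \<in> {1..2*n+1}" "s \<in> J" for k s using RB_pos[OF RB that] .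
  have Pp: "?P s > 0" if "s \<in> J" for s using gp[OF _ that, of 1] gp[OF _ that, of "n+1"] n1 by auto
  have g1p: "g 1 s > 0" "g (n+1) s > 0" if "s \<in> J" for s using gp[OF _ that, of 1] gp[OF _ that, of "n+1"] n1 by auto
  have P0p: "P0 > 0" unfolding P0_def using Pp[OF J(2)] .
  have N0p: "N0 > 0" unfolding N0_def using Np[OF J(2)] .
  have Peq: "g i s * g (n+i) s = ?P s" if "i \<in> {1..n}" "s \<in> J" for i s
    by (rule P_equal[OF RB that n1]) (use H that in \<open>auto simp: add.commute\<close>)
  have Seq: "?S s = real n / ?P s" if s: "s \<in> J" for s
  proof -
    have "?S s = (\<Sum>k=1..n. 1 / ?P s)" unfolding Sigma_H_def
      by (rule sum.cong) (use Peq s in auto)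
    then show ?thesis by simp
  qed
  have Zlin: "?P t / ?N t = P0 / N0 + c * t" if t: "t \<in> J" for t
  proof -
    have dZ: "((\<lambda>s. ?P s / ?N s - c * s) has_real_derivative 0) (at x within J)" if x: "x \<in> J" for x
    proof -
      have "((\<lambda>s. ?P s / ?N s - c * s) has_real_derivative
         ((2 * ?N x - 2 * \<rho> * ?P x * ?N x * ?S x) * ?N x - ?P x * (- (1+\<rho>) * (?N x)^2 * ?S x)) / (?N x * ?N x) - c * 1)
         (at x within J)"
        by (rule DERIV_diff[OF DERIV_divide[OF RB_d_P[OF RB i1 x] RB_d_N[OF RB x]] DERIV_cmult[OF DERIV_ident]])
           (use Np[OF x] in simp)
      moreover have "((2 * ?N x - 2 * \<rho> * ?P x * ?N x * ?S x) * ?N x - ?P x * (- (1+\<rho>) * (?N x)^2 * ?S x)) / (?N x * ?N x) - c * 1 = 0"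
        unfolding Seq[OF x] c_def using Np[OF x] g1p[OF x] by (simp add: field_simps power2_eq_square)
      ultimately show ?thesis by simp
    qed
    have "(\<lambda>s. ?P s / ?N s - c * s) t = (\<lambda>s. ?P s / ?N s - c * s) 0"
      by (rule const_deriv[OF J(1) dZ t J(2)])
    then show ?thesis unfolding P0_def N0_def by simp
  qed
  define K where "K = {s \<in> J. 1 + b * s > 0}"
  have K: "is_interval K" unfolding is_interval_1 K_def
  proof (intro ballI allI impI, simp, intro conjI)
    fix x y z assume a: "x \<in> J \<and> 0 < 1 + b * x" "y \<in> J \<and> 0 < 1 + b * y" "x \<le> z \<and> z \<le> y"
    show "z \<in> J" using J(1) a unfolding is_interval_1 by blast
    show "0 < 1 + b * z"
    proof (cases "b \<ge> 0")
      case True then have "b * x \<le> b * z" using a by (simp add: mult_left_mono)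
      then show ?thesis using a by linarith
    next
      case False then have "b * y \<le> b * z" using a by (simp add: mult_left_mono_neg)
      then show ?thesis using a by linarith
    qed
  qed
  have K0: "0 \<in> K" unfolding K_def using J by auto
  have Kpos: "1 + b * s > 0" if "s \<in> K" for s using that unfolding K_def by auto
  have KJ: "K \<subseteq> J" unfolding K_def by auto
  have Qeq: "?N s / ?P s = N0 / (P0 * (1 + b * s))" if s: "s \<in> K" for s
  proof -
    have sJ: "s \<in> J" using s KJ by auto
    have "P0 / N0 * (1 + b * s) = P0 / N0 + c * s" unfolding b_def using N0p P0p
      by (simp add: field_simps)
    then have "?P s / ?N s = P0 / N0 * (1 + b * s)" using Zlin[OF sJ] by simp
    then show ?thesis using Np[OF sJ] Pp[OF sJ] N0p P0p Kpos[OF s]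
      by (metis (no_types, lifting) divide_divide_eq_left' inverse_divide mult.commute divide_inverse)
  qed
  have cz: "c \<noteq> 0" using nz unfolding c_def .
  have hbeta: "(real n + real n * \<rho>) / (real n * \<rho> - real n - 2) * b = - (1+\<rho>) * real n * N0 / P0"
  proof -
    have e: "real n * \<rho> - real n - 2 = - c" by (simp add: c_def)
    show ?thesis unfolding e b_def using cz P0p by (simp add: field_simps)
  qed
  have halpha: "(1 - real n * \<rho>) / (real n + 2 - real n * \<rho>) * b = (1 - real n * \<rho>) * N0 / P0"
    unfolding c_def[symmetric] b_def using cz P0p by (simp add: field_simps)
  have resN: "?N t = ?N 0 * (1 + b * t) powr ((real n + real n * \<rho>) / (real n * \<rho> - real n - 2))"
    if t: "t \<in> K" for t
  proof (rule exp_factor[OF K K0 t Kpos])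
    fix s assume s: "s \<in> K"
    have sJ: "s \<in> J" using s KJ by auto
    have "- (1+\<rho>) * (?N s)^2 * ?S s = - (1+\<rho>) * real n * (?N s / ?P s) * ?N s"
      unfolding Seq[OF sJ] by (simp add: power2_eq_square)
    also have "\<dots> = ((real n + real n * \<rho>) / (real n * \<rho> - real n - 2) * b / (1 + b * s)) * ?N s"
      unfolding Qeq[OF s] hbeta using P0p Kpos[OF s] by (simp add: field_simps)
    finally show "(?N has_real_derivative ((real n + real n * \<rho>) / (real n * \<rho> - real n - 2) * b / (1 + b * s)) * ?N s) (at s within K)"
      using DERIV_subset[OF RB_d_N[OF RB sJ] KJ] by simp
  qed
  have resj: "g j t = g j 0 * (1 + b * t) powr ((1 - real n * \<rho>) / (real n + 2 - real n * \<rho>))"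
    if t: "t \<in> K" and j: "j \<in> {1..2*n}" for t j
  proof (rule exp_factor[OF K K0 t Kpos])
    fix s assume s: "s \<in> K"
    have sJ: "s \<in> J" using s KJ by auto
    have ab: "(1 - real n * \<rho>) / (real n + 2 - real n * \<rho>) * b / (1 + b * s) = (1 - real n * \<rho>) * (N0 / (P0 * (1 + b * s)))"
      unfolding halpha using P0p Kpos[OF s] by (simp add: field_simps)
    show "(g j has_real_derivative ((1 - real n * \<rho>) / (real n + 2 - real n * \<rho>) * b / (1 + b * s)) * g j s) (at s within K)"
    proof (cases "j \<le> n")
      case True
      then have jj: "j \<in> {1..n}" using j by auto
      have "?N s / g (n+j) s - \<rho> * g j s * ?N s * ?S s = g j s * (1 - real n * \<rho>) * (?N s / (g j s * g (n+j) s))"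
        unfolding Seq[OF sJ] Peq[OF jj sJ, symmetric] using gp[OF _ sJ, of j] gp[OF _ sJ, of "n+j"] jj
        by (simp add: field_simps)
      also have "\<dots> = ((1 - real n * \<rho>) / (real n + 2 - real n * \<rho>) * b / (1 + b * s)) * g j s"
        unfolding ab Peq[OF jj sJ] Qeq[OF s] by simp
      finally show ?thesis using DERIV_subset[OF RB_d_low[OF RB jj sJ] KJ] by simp
    next
      case False
      define i where "i = j - n"
      have jj: "i \<in> {1..n}" and ji: "j = n + i" using j False unfolding i_def by auto
      have "?N s / g i s - \<rho> * g (n+i) s * ?N s * ?S s = g (n+i) s * (1 - real n * \<rho>) * (?N s / (g i s * g (n+i) s))"
        unfolding Seq[OF sJ] Peq[OF jj sJ, symmetric] using gp[OF _ sJ, of i] gp[OF _ sJ, of "n+i"] jj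
        by (simp add: field_simps)
      also have "\<dots> = ((1 - real n * \<rho>) / (real n + 2 - real n * \<rho>) * b / (1 + b * s)) * g (n+i) s"
        unfolding ab Peq[OF jj sJ] Qeq[OF s] by simp
      finally show ?thesis unfolding ji using DERIV_subset[OF RB_d_high[OF RB jj sJ] KJ] by simp
    qed
  qed
  have bb: "(real n + 2 - real n * \<rho>) * g (2*n+1) 0 / (g 1 0 * g (1 + n) 0) = b"
    unfolding b_def c_def N0_def P0_def by (simp add: add.commute)
  show ?thesis unfolding Let_def bb
  proof (intro ballI impI conjI)
    fix t assume "t \<in> J" "0 < 1 + b * t"
    then have t: "t \<in> K" unfolding K_def by auto
    show "?N t = ?N 0 * (1 + b * t) powr ((real n + real n * \<rho>) / (real n * \<rho> - real n - 2))"
      by (rule resN[OF t])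
    fix j assume "j \<in> {1..2*n}"
    then show "g j t = g j 0 * (1 + b * t) powr ((1 - real n * \<rho>) / (real n + 2 - real n * \<rho>))"
      by (rule resj[OF t])
  qed
qed

theorem theorem2p4:
  fixes n :: nat and \<rho> :: real and g :: "nat \<Rightarrow> real \<Rightarrow> real" and J :: "real set"
  assumes "1 \<le> n"
    and "RB_solution n \<rho> g J"
  shows
    "(\<forall>i\<in>{1..n}. \<forall>t\<in>J.
        ((\<lambda>s. g i s / g (i + n) s) has_real_derivative 0) (at t within J))
   \<and> (\<rho> \<noteq> -1 \<longrightarrow> (\<forall>t\<in>J.
        ((\<lambda>s. (\<Prod>i=1..n. g i s) * g (2*n+1) s powr ((1 - real n * \<rho>) / (1 + \<rho>)))
           has_real_derivative 0) (at t within J)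
      \<and> ((\<lambda>s. (\<Prod>i=1..n. g (i + n) s) * g (2*n+1) s powr ((1 - real n * \<rho>) / (1 + \<rho>)))
           has_real_derivative 0) (at t within J)))
   \<and> (\<rho> < 0 \<longrightarrow> {0..} \<subseteq> J \<longrightarrow>
        filterlim (\<lambda>t. integral {0..t} (g (2*n+1))) at_top at_top)
   \<and> ((\<forall>i\<in>{1..n}. g i 0 * g (n + i) 0 = g 1 0 * g (1 + n) 0) \<longrightarrow>
        real n + 2 - real n * \<rho> \<noteq> 0 \<longrightarrow>
        (let b = (real n + 2 - real n * \<rho>) * g (2*n+1) 0 / (g 1 0 * g (1 + n) 0) in
          \<forall>t\<in>J. 1 + b * t > 0 \<longrightarrow>
            (\<forall>j\<in>{1..2*n}. g j t = g j 0 * (1 + b * t) powr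
                 ((1 - real n * \<rho>) / (real n + 2 - real n * \<rho>)))
            \<and> g (2*n+1) t = g (2*n+1) 0 * (1 + b * t) powr
                 ((real n + real n * \<rho>) / (real n * \<rho> - real n - 2))))"
  apply (intro conjI)
  subgoal using part_a[OF assms(2)] by blast
  subgoal using part_b[OF assms(2)] by blast
  subgoal using part_c[OF assms(2)] by blast
  subgoal using part_d[OF assms(2) assms(1)] by blast
  done

end
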